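(* Let $T$ take values in $\mathcal{S}\subseteq\mathbb{N}$, $q_t=\mathbb{P}(T=t)$, with $\mathbb{E}[T^\delta]<\infty$ for some $\delta>0$. Fix $\tau\in(0,1)$, a kernel $\kappa:\mathcal{S}^2\to[0,\infty)$, and two vertex types $t,s\in\mathcal{S}$ that are stable at tolerance $\tau$; set $\Lambda_n(t,s)=\lfloor nq_tq_s\kappa(t,s)\rfloor$. Let $\kappa_n'$ be another kernel for which there exist $\alpha\in(1/2-\tau/2,1/2)$ and $C>0$ with $$\kappa_n'(t,s)\le\kappa(t,s)-\frac{Cn^{-1/2+\alpha}}{\sqrt{q_tq_s}},$$ and let $A_n$ be the arc-to-vertex-type function of $\texttt{IRD}_n(T,\kappa_n')$. Then for all sufficiently large $n$, $\mathbb{P}(A_n(t,s)>\Lambda_n(t,s))\le2\exp(-\log(n)^2/2)$.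
   Context: $\texttt{IRD}_n(T,\kappa_n')$: vertex set $[n]$, types $T_v$ i.i.d. as $T$, each arc $(v,w)$, $v\ne w$, present independently with probability $\min\{\kappa_n'(T_v,T_w)/n,1\}$. Arc-to-vertex-type function: $A_n(t,s)=|\{(v,w)\text{ arc}:T_v=t,T_w=s\}|$. Stability: $u_n^\uparrow(\tau)=\inf\{t:q_s<n^{-1+\tau}\ \forall s\ge t\}$; type $t$ is stable at tolerance $\tau$ if $t<u_n^\uparrow(\tau)$. *)

theory Defs
  imports "HOL-Probability.Probability"
begin

text \<open>Type distribution: a pmf p on the naturals, q_t = pmf p t.\<close>

definition u_up :: "nat pmf \<Rightarrow> real \<Rightarrow> nat \<Rightarrow> nat" where
  "u_up p \<tau> n = Inf {u::nat. \<forall>s\<ge>u. pmf p s < real n powr (-1 + \<tau>)}"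

definition stable :: "nat pmf \<Rightarrow> real \<Rightarrow> nat \<Rightarrow> nat \<Rightarrow> bool" where
  "stable p \<tau> n t \<longleftrightarrow> t < u_up p \<tau> n"

definition IRD :: "nat \<Rightarrow> nat pmf \<Rightarrow> (nat \<Rightarrow> nat \<Rightarrow> real)
                     \<Rightarrow> ((nat \<Rightarrow> nat) \<times> (nat \<times> nat \<Rightarrow> bool)) pmf" where
  "IRD n p \<kappa> =
     do { T \<leftarrow> Pi_pmf {1..n} 0 (\<lambda>_. p);
          E \<leftarrow> Pi_pmf {(v, w). v \<in> {1..n} \<and> w \<in> {1..n} \<and> v \<noteq> w} False
                 (\<lambda>(v, w). bernoulli_pmf (min (\<kappa> (T v) (T w) / real n) 1));
          return_pmf (T, E) }"

definition arc_count :: "nat \<Rightarrow> (nat \<Rightarrow> nat) \<times> (nat \<times> nat \<Rightarrow> bool) \<Rightarrow> nat \<Rightarrow> nat \<Rightarrow> nat" where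
  "arc_count n G t s = card {(v, w). v \<in> {1..n} \<and> w \<in> {1..n} \<and> v \<noteq> w \<and>
                                  snd G (v, w) \<and> fst G v = t \<and> fst G w = s}"

end

theory Submission
  imports Defs "HOL-Real_Asymp.Real_Asymp"
begin


lemma prob_bind_pmf:
  "measure_pmf.prob (bind_pmf M N) X = measure_pmf.expectation M (\<lambda>x. measure_pmf.prob (N x) X)"
proof -
  have "ennreal (measure_pmf.prob (bind_pmf M N) X) = emeasure (bind_pmf M N) X"
    by (simp add: measure_pmf.emeasure_eq_measure)
  also have "\<dots> = (\<integral>\<^sup>+x. emeasure (N x) X \<partial>M)"
    by (rule emeasure_bind_pmf)
  also have "\<dots> = (\<integral>\<^sup>+x. ennreal (measure_pmf.prob (N x) X) \<partial>M)"
    by (intro nn_integral_cong) (simp add: measure_pmf.emeasure_eq_measure)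
  also have "\<dots> = ennreal (measure_pmf.expectation M (\<lambda>x. measure_pmf.prob (N x) X))"
    by (intro nn_integral_eq_integral measure_pmf.integrable_const_bound[where B=1]) auto
  finally show ?thesis by (simp add: integral_nonneg_AE)
qed

lemma chernoff_Pi:
  fixes A D :: "'a set" and P :: "'a \<Rightarrow> 'b pmf" and Q :: "'b \<Rightarrow> bool"
  assumes fin: "finite A" and DA: "D \<subseteq> A"
    and pr: "\<And>x. x \<in> D \<Longrightarrow> measure_pmf.prob (P x) {y. Q y} \<le> r"
    and lam: "l > 0"
  shows "measure_pmf.prob (Pi_pmf A dflt P) {f. c \<le> real (card {x\<in>D. Q (f x)})}
           \<le> exp (real (card D) * r * (exp l - 1) - l * c)"
proof -
  define g where "g = (\<lambda>x y. if x \<in> D \<and> Q y then exp l else (1::real))"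
  have finD: "finite D" using fin DA finite_subset by blast
  have prodeq: "(\<Prod>x\<in>A. g x (f x)) = exp (l * real (card {x\<in>D. Q (f x)}))" for f
  proof -
    have "(\<Prod>x\<in>A. g x (f x)) = (\<Prod>x\<in>{x\<in>D. Q (f x)}. exp l)"
      unfolding g_def using fin DA
      by (intro prod.mono_neutral_cong_right) auto
    also have "\<dots> = exp l ^ card {x\<in>D. Q (f x)}" by simp
    also have "\<dots> = exp (l * real (card {x\<in>D. Q (f x)}))"
      by (simp add: exp_of_nat_mult[symmetric] mult.commute)
    finally show ?thesis .
  qed
  let ?M = "Pi_pmf A dflt P"
  let ?X = "\<lambda>f. exp (l * real (card {x\<in>D. Q (f x)}))"
  have "measure_pmf.prob ?M {f. c \<le> real (card {x\<in>D. Q (f x)})}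
        = measure_pmf.prob ?M {f\<in>space (measure_pmf ?M). exp (l * c) \<le> ?X f}"
    using lam by simp
  also have "\<dots> \<le> measure_pmf.expectation ?M ?X / exp (l * c)"
    by (intro integral_Markov_inequality_measure measure_pmf.integrable_const_bound[where B="exp (l * card D)"])
       (auto intro!: card_mono finD always_eventually mult_left_mono simp: less_imp_le lam)
  also have "measure_pmf.expectation ?M ?X = measure_pmf.expectation ?M (\<lambda>f. \<Prod>x\<in>A. g x (f x))"
    by (simp add: prodeq)
  also have "\<dots> = (\<Prod>x\<in>A. measure_pmf.expectation (P x) (g x))"
    by (intro expectation_prod_Pi_pmf fin measure_pmf.integrable_const_bound[where B="exp l"])
       (use lam in \<open>auto simp: g_def\<close>)
  also have "\<dots> \<le> (\<Prod>x\<in>A. if x \<in> D then exp (r * (exp l - 1)) else 1)"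
  proof (intro prod_mono conjI)
    fix x assume x: "x \<in> A"
    show "0 \<le> measure_pmf.expectation (P x) (g x)"
      by (intro integral_nonneg_AE) (auto simp: g_def)
    show "measure_pmf.expectation (P x) (g x) \<le> (if x \<in> D then exp (r * (exp l - 1)) else 1)"
    proof (cases "x \<in> D")
      case True
      have "g x = (\<lambda>y. 1 + (exp l - 1) * indicator {y. Q y} y)"
        using True by (auto simp: g_def fun_eq_iff indicator_def)
      have "measure_pmf.expectation (P x) (g x) = 1 + (exp l - 1) * measure_pmf.prob (P x) {y. Q y}"
      proof -
        have i1: "integrable (measure_pmf (P x)) (\<lambda>y. (exp l - 1) * indicat_real {y. Q y} y)"
          by (intro measure_pmf.integrable_const_bound[where B="\<bar>exp l - 1\<bar>"]) (auto simp: indicator_def)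
        have "measure_pmf.expectation (P x) (\<lambda>y. 1 + (exp l - 1) * indicat_real {y. Q y} y)
              = measure_pmf.expectation (P x) (\<lambda>y. 1) + measure_pmf.expectation (P x) (\<lambda>y. (exp l - 1) * indicat_real {y. Q y} y)"
          by (rule Bochner_Integration.integral_add) (simp, rule i1)
        also have "\<dots> = 1 + (exp l - 1) * measure_pmf.prob (P x) {y. Q y}"
        proof -
          have "integrable (measure_pmf (P x)) (indicat_real (Collect Q))"
            by (rule measure_pmf.integrable_const_bound[where B=1]) (auto simp: indicator_def)
          then show ?thesis by simp
        qed
        finally show ?thesis by (simp add: \<open>g x = _\<close>)
      qed
      also have "\<dots> \<le> 1 + (exp l - 1) * r"
        using pr[OF True] lam by (intro add_left_mono mult_left_mono) auto
      also have "\<dots> \<le> exp (r * (exp l - 1))"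
        using exp_ge_add_one_self[of "r * (exp l - 1)"] by (simp add: mult.commute)
      finally show ?thesis using True by simp
    next
      case False
      then show ?thesis by (simp add: g_def)
    qed
  qed
  also have "(\<Prod>x\<in>A. if x \<in> D then exp (r * (exp l - 1)) else 1) = exp (r * (exp l - 1)) ^ card D"
    using fin DA by (subst prod.If_cases) (auto simp: Int_absorb1)
  also have "\<dots> = exp (real (card D) * r * (exp l - 1))"
    by (simp add: exp_of_nat_mult[symmetric] mult.assoc)
  finally have "measure_pmf.prob ?M {f. c \<le> real (card {x\<in>D. Q (f x)})} \<le> exp (real (card D) * r * (exp l - 1)) / exp (l * c)" by (simp add: divide_right_mono)
  then show ?thesis by (simp add: exp_diff)
qed


lemma IRD_tail:
  fixes n :: nat and p :: "nat pmf" and k :: "nat \<Rightarrow> nat \<Rightarrow> real" and t s :: nat and a l c :: real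
  assumes k0: "0 \<le> k t s" and l0: "l > 0" and a0: "0 \<le> a"
  shows "measure_pmf.prob (IRD n p k) {G. c \<le> real (arc_count n G t s)} \<le>
     exp ((real n * pmf p t + a) * (real n * pmf p s + a) * (k t s / real n) * (exp l - 1) - l * c)
     + exp (real n * pmf p t * (exp l - 1) - l * (real n * pmf p t + a))
     + exp (real n * pmf p s * (exp l - 1) - l * (real n * pmf p s + a))"
proof -
  define V where "V = {1..n}"
  define PS where "PS = {(v, w). v \<in> V \<and> w \<in> V \<and> v \<noteq> w}"
  define TP where "TP = Pi_pmf V 0 (\<lambda>_. p)"
  define EP where "EP = (\<lambda>T::nat\<Rightarrow>nat. Pi_pmf PS False
                 (\<lambda>(v, w). bernoulli_pmf (min (k (T v) (T w) / real n) 1)))"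
  define B where "B = {G. c \<le> real (arc_count n G t s)}"
  define q1 where "q1 = pmf p t"
  define q2 where "q2 = pmf p s"
  define M where "M = (real n * q1 + a) * (real n * q2 + a)"
  define e1 where "e1 = exp (M * (k t s / real n) * (exp l - 1) - l * c)"
  define Bt where "Bt = {T::nat\<Rightarrow>nat. real n * q1 + a \<le> real (card {v\<in>V. T v = t})}"
  define Bs where "Bs = {T::nat\<Rightarrow>nat. real n * q2 + a \<le> real (card {v\<in>V. T v = s})}"
  have finV: "finite V" by (simp add: V_def)
  have cardV: "card V = n" by (simp add: V_def)
  have finPS: "finite PS"
    by (rule finite_subset[of _ "V \<times> V"]) (auto simp: PS_def finV)
  have IRD_eq: "IRD n p k = TP \<bind> (\<lambda>T. map_pmf (\<lambda>E. (T, E)) (EP T))"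
    by (simp add: IRD_def map_pmf_def TP_def EP_def PS_def V_def)
  have "measure_pmf.prob (IRD n p k) B
        = measure_pmf.expectation TP (\<lambda>T. measure_pmf.prob (EP T) ((\<lambda>E. (T, E)) -` B))"
    unfolding IRD_eq prob_bind_pmf by simp
  also have "\<dots> \<le> measure_pmf.expectation TP (\<lambda>T. e1 + indicator (Bt \<union> Bs) T)"
  proof (rule integral_mono)
    show "integrable (measure_pmf TP) (\<lambda>T. measure_pmf.prob (EP T) ((\<lambda>E. (T, E)) -` B))"
      by (intro measure_pmf.integrable_const_bound[where B=1]) auto
    show "integrable (measure_pmf TP) (\<lambda>T. e1 + indicator (Bt \<union> Bs) T)"
      by (intro measure_pmf.integrable_const_bound[where B="\<bar>e1\<bar> + 1"])
         (auto simp: indicator_def)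
    fix T :: "nat \<Rightarrow> nat"
    show "measure_pmf.prob (EP T) ((\<lambda>E. (T, E)) -` B) \<le> e1 + indicator (Bt \<union> Bs) T"
    proof (cases "T \<in> Bt \<union> Bs")
      case True
      have h1: "measure_pmf.prob (EP T) ((\<lambda>E. (T, E)) -` B) \<le> 1" by simp
      have h2: "0 < e1" by (simp add: e1_def)
      have h3: "indicator (Bt \<union> Bs) T = (1::real)" using True by simp
      show ?thesis using h1 h2 h3 by linarith
    next
      case False
      define D where "D = {(v, w). v \<in> V \<and> w \<in> V \<and> v \<noteq> w \<and> T v = t \<and> T w = s}"
      define \<pi> where "\<pi> = min (k t s / real n) 1"
      have DPS: "D \<subseteq> PS" by (auto simp: D_def PS_def)
      have Dsub: "D \<subseteq> {v\<in>V. T v = t} \<times> {v\<in>V. T v = s}" by (auto simp: D_def)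
      have "card D \<le> card ({v\<in>V. T v = t} \<times> {v\<in>V. T v = s})"
        by (intro card_mono Dsub) (simp add: finV)
      also have "\<dots> = card {v\<in>V. T v = t} * card {v\<in>V. T v = s}"
        by (simp add: card_cartesian_product)
      finally have cD: "real (card D) \<le> real (card {v\<in>V. T v = t}) * real (card {v\<in>V. T v = s})"
        by (metis of_nat_le_iff of_nat_mult)
      have "real (card D) \<le> M"
      proof -
        have f1: "real (card {v\<in>V. T v = t}) \<le> real n * q1 + a"
          using False by (auto simp: Bt_def)
        have f2: "real (card {v\<in>V. T v = s}) \<le> real n * q2 + a"
          using False by (auto simp: Bs_def)
        have "real (card {v\<in>V. T v = t}) * real (card {v\<in>V. T v = s}) \<le> M"
          unfolding M_def by (intro mult_mono f1 f2) (use f1 in auto)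
        then show ?thesis using cD by linarith
      qed
      have pi0: "0 \<le> \<pi>" "\<pi> \<le> 1" using k0 by (auto simp: \<pi>_def)
      have pile: "\<pi> \<le> k t s / real n" by (simp add: \<pi>_def)
      have "(\<lambda>E. (T, E)) -` B = {E. c \<le> real (card {x\<in>D. E x})}"
      proof -
        have "{x\<in>D. E x} = {(v, w). v \<in> {1..n} \<and> w \<in> {1..n} \<and> v \<noteq> w \<and>
                 snd (T, E) (v, w) \<and> fst (T, E) v = t \<and> fst (T, E) w = s}" for E
          by (auto simp: D_def V_def)
        then show ?thesis by (simp add: B_def arc_count_def)
      qed
      also have "measure_pmf.prob (EP T) \<dots> \<le> exp (real (card D) * \<pi> * (exp l - 1) - l * c)"
        unfolding EP_def
      proof (rule chernoff_Pi[OF finPS DPS _ l0])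
        fix x assume "x \<in> D"
        then obtain v w where x: "x = (v, w)" "T v = t" "T w = s" by (auto simp: D_def)
        show "measure_pmf.prob ((\<lambda>(v, w). bernoulli_pmf (min (k (T v) (T w) / real n) 1)) x) {y. y} \<le> \<pi>"
        proof -
          have "{y. y} = {True}" by auto
          then show ?thesis using x pi0 by (simp add: measure_pmf_single \<pi>_def)
        qed
      qed
      also have "\<dots> \<le> e1"
        unfolding e1_def
      proof (intro exp_mono diff_right_mono mult_right_mono mult_mono)
        show "real (card D) \<le> M" by fact
        show "\<pi> \<le> k t s / real n" by fact
      qed (use pi0 l0 k0 a0 in \<open>auto simp: M_def q1_def q2_def\<close>)
      finally show ?thesis using False by simp
    qed
  qed
  also have "\<dots> = e1 + measure_pmf.prob TP (Bt \<union> Bs)"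
    by (simp add: Bochner_Integration.integral_add measure_pmf.integrable_const_bound[where B=1])
  also have "measure_pmf.prob TP (Bt \<union> Bs) \<le> measure_pmf.prob TP Bt + measure_pmf.prob TP Bs"
    by (rule measure_Un_le) auto
  also have "measure_pmf.prob TP Bt \<le> exp (real n * q1 * (exp l - 1) - l * (real n * q1 + a))"
    unfolding Bt_def TP_def
    using chernoff_Pi[OF finV order_refl, of "\<lambda>_. p" "\<lambda>y. y = t" q1 l 0 "real n * q1 + a"] l0
    by (simp add: cardV q1_def measure_pmf_single)
  also have "measure_pmf.prob TP Bs \<le> exp (real n * q2 * (exp l - 1) - l * (real n * q2 + a))"
    unfolding Bs_def TP_def
    using chernoff_Pi[OF finV order_refl, of "\<lambda>_. p" "\<lambda>y. y = s" q2 l 0 "real n * q2 + a"] l0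
    by (simp add: cardV q2_def measure_pmf_single)
  finally show ?thesis by (simp add: B_def e1_def M_def q1_def q2_def add.assoc)
qed




lemma alg_core:
  fixes r y q1 q2 k K C w :: real
  assumes r1: "r \<ge> 1" and y1: "1 \<le> y" and yr: "y \<le> r" and y2r: "y\<^sup>2 \<le> r"
    and q1: "0 \<le> q1" "q1 \<le> 1" and q2: "0 \<le> q2" "q2 \<le> 1"
    and w: "w > 0" "w\<^sup>2 = q1 * q2" and k0: "0 \<le> k" and kle: "k \<le> K - C * y\<^sup>2 / (r * w)"
    and C: "C > 0"
  shows "(r * q1 + y) * (r * q2 + y) * k * (1/r + 1/r\<^sup>2) - r * q1 * q2 * K
         \<le> - C * w * y\<^sup>2 + 2 * K * y + 5 * K"
proof -
  have r0: "r > 0" using r1 by simp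
  have Cy: "0 \<le> C * y\<^sup>2 / (r * w)" using C r0 w by simp
  have kK: "k \<le> K" using kle Cy by linarith
  have K0: "0 \<le> K" using k0 kK by linarith
  have e1: "(r * q1 + y) * (r * q2 + y) * k * (1/r) = k * (r * q1 * q2) + k * y * (q1 + q2) + k * (y\<^sup>2 / r)"
    using r0 by (simp add: field_simps power2_eq_square)
  have "k * (r * q1 * q2) \<le> (K - C * y\<^sup>2 / (r * w)) * (r * q1 * q2)"
    using kle q1 q2 r0 by (intro mult_right_mono) auto
  also have "\<dots> = K * (r * q1 * q2) - C * w * y\<^sup>2"
    using r0 w by (simp add: field_simps power2_eq_square)
  finally have t1: "k * (r * q1 * q2) \<le> K * (r * q1 * q2) - C * w * y\<^sup>2" .
  have t2: "k * y * (q1 + q2) \<le> K * y * 2"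
    using kK k0 y1 q1 q2 by (intro mult_mono) auto
  have "y\<^sup>2 / r \<le> 1" using y2r r0 by simp
  hence t3: "k * (y\<^sup>2 / r) \<le> K" using k0 kK
    by (metis mult_left_le order_trans)
  have e2: "(r * q1 + y) * (r * q2 + y) * k * (1/r\<^sup>2) = k * ((q1 + y / r) * (q2 + y / r))"
    using r0 by (simp add: field_simps power2_eq_square)
  have yr1: "y / r \<le> 1" using yr r0 by simp
  have yr0: "0 \<le> y / r" using y1 r0 by simp
  have "(q1 + y / r) * (q2 + y / r) \<le> 2 * 2"
    using q1 q2 yr1 yr0 by (intro mult_mono) auto
  hence t4: "k * ((q1 + y / r) * (q2 + y / r)) \<le> K * 4"
    using k0 kK q1 q2 yr0
    by (intro mult_mono) auto
  have "(r * q1 + y) * (r * q2 + y) * k * (1/r + 1/r\<^sup>2) =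
        (r * q1 + y) * (r * q2 + y) * k * (1/r) + (r * q1 + y) * (r * q2 + y) * k * (1/r\<^sup>2)"
    by (simp add: distrib_left)
  then show ?thesis using e1 e2 t1 t2 t3 t4 by (simp add: algebra_simps)
qed


lemma powr_facts:
  fixes x \<alpha> :: real
  assumes x: "x \<ge> 1" and a: "0 < \<alpha>" "\<alpha> < 1/2"
  shows "x powr (1/2 + \<alpha>/2) = sqrt x * x powr (\<alpha>/2)"
    and "x powr (-1/2) = 1 / sqrt x"
    and "x powr (-1/2 + \<alpha>) = (x powr (\<alpha>/2))\<^sup>2 / sqrt x"
    and "1 \<le> x powr (\<alpha>/2)" and "x powr (\<alpha>/2) \<le> sqrt x" and "(x powr (\<alpha>/2))\<^sup>2 \<le> sqrt x"
    and "1 \<le> sqrt x" and "x = (sqrt x)\<^sup>2"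
proof -
  have x0: "0 \<le> x" using x by simp
  have sq: "x powr (1/2) = sqrt x" using x0 by (rule powr_half_sqrt)
  have y2: "(x powr (\<alpha>/2))\<^sup>2 = x powr \<alpha>"
    unfolding power2_eq_square powr_add[symmetric] by simp
  show "x powr (1/2 + \<alpha>/2) = sqrt x * x powr (\<alpha>/2)" unfolding powr_add sq ..
  have mm: "x powr (-1/2) = x powr (- (1/2))" by simp
  show m: "x powr (-1/2) = 1 / sqrt x"
    unfolding mm powr_minus_divide sq ..
  have "x powr (-1/2 + \<alpha>) = x powr \<alpha> * x powr (-1/2)"
    unfolding powr_add[symmetric] by simp
  then show "x powr (-1/2 + \<alpha>) = (x powr (\<alpha>/2))\<^sup>2 / sqrt x"
    unfolding m y2 by simp
  show "1 \<le> x powr (\<alpha>/2)" using x a by (intro ge_one_powr_ge_zero) auto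
  have "x powr (\<alpha>/2) \<le> x powr (1/2)" by (rule powr_mono) (use x a in auto)
  then show "x powr (\<alpha>/2) \<le> sqrt x" unfolding sq .
  have "x powr \<alpha> \<le> x powr (1/2)" by (rule powr_mono) (use x a in auto)
  then show "(x powr (\<alpha>/2))\<^sup>2 \<le> sqrt x" unfolding y2 sq .
  show "1 \<le> sqrt x" using x by simp
  show "x = (sqrt x)\<^sup>2" using x0 by simp
qed

lemma alg_x:
  fixes x q1 q2 k K C \<alpha> :: real
  assumes x: "x \<ge> 1" and q1: "0 < q1" "q1 \<le> 1" and q2: "0 < q2" "q2 \<le> 1"
    and k0: "0 \<le> k" and kle: "k \<le> K - C * x powr (-1/2 + \<alpha>) / sqrt (q1 * q2)"
    and C: "C > 0" and a: "0 < \<alpha>" "\<alpha> < 1/2"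
  shows "exp ((x * q1 + x powr (1/2 + \<alpha>/2)) * (x * q2 + x powr (1/2 + \<alpha>/2)) * (k / x) *
            (exp (x powr (-1/2)) - 1) - x powr (-1/2) * (x * q1 * q2 * K))
       \<le> exp (- C * sqrt (q1 * q2) * (x powr (\<alpha>/2))\<^sup>2 + 2 * K * x powr (\<alpha>/2) + 5 * K)"
proof -
  define r where "r = sqrt x"
  define y where "y = x powr (\<alpha>/2)"
  define w where "w = sqrt (q1 * q2)"
  note pf = powr_facts[OF x a, folded r_def y_def]
  have r1: "1 \<le> r" by (rule pf(7))
  have r0: "r > 0" using r1 by simp
  have w: "w > 0" "w\<^sup>2 = q1 * q2" using q1 q2 by (auto simp: w_def)
  have kle': "k \<le> K - C * y\<^sup>2 / (r * w)"
    using kle unfolding pf(3) w_def[symmetric] by (simp add: field_simps)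
  have core: "(r * q1 + y) * (r * q2 + y) * k * (1/r + 1/r\<^sup>2) - r * q1 * q2 * K
         \<le> - C * w * y\<^sup>2 + 2 * K * y + 5 * K"
    by (rule alg_core[OF r1 pf(4) pf(5) pf(6) _ q1(2) _ q2(2) w k0 kle' C]) (use q1 q2 in auto)
  have eb: "exp (1/r) - 1 \<le> 1/r + 1/r\<^sup>2"
    using exp_bound[of "1/r"] r1 by (simp add: power_divide)
  have P0: "0 \<le> (r * q1 + y) * (r * q2 + y) * k"
    using r0 q1 q2 pf(4) k0 by simp
  have "(x * q1 + x powr (1/2 + \<alpha>/2)) * (x * q2 + x powr (1/2 + \<alpha>/2)) * (k / x) *
            (exp (x powr (-1/2)) - 1) - x powr (-1/2) * (x * q1 * q2 * K)
        = (r * q1 + y) * (r * q2 + y) * k * (exp (1/r) - 1) - r * q1 * q2 * K"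
  proof -
    have xr: "x = r * r" using pf(8) by (simp add: power2_eq_square)
    have h1: "x * q1 + r * y = r * (r * q1 + y)" "x * q2 + r * y = r * (r * q2 + y)"
      by (simp_all add: xr algebra_simps)
    have h2: "r * (r * q1 + y) * (r * (r * q2 + y)) * (k / x) = (r * q1 + y) * (r * q2 + y) * k"
      using r0 by (simp add: xr)
    have h3: "1 / r * (x * q1 * q2 * K) = r * q1 * q2 * K"
      using r0 by (simp add: xr)
    show ?thesis unfolding pf(1) pf(2) h1 h2 h3 ..
  qed
  also have "\<dots> \<le> (r * q1 + y) * (r * q2 + y) * k * (1/r + 1/r\<^sup>2) - r * q1 * q2 * K"
    using mult_left_mono[OF eb P0] by linarith
  also note core
  finally show ?thesis unfolding w_def y_def by simp
qed

lemma alg_t: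
  fixes x q \<alpha> :: real
  assumes x: "x \<ge> 1" and q: "0 \<le> q" "q \<le> 1" and a: "0 < \<alpha>" "\<alpha> < 1/2"
  shows "exp (x * q * (exp (x powr (-1/2)) - 1) - x powr (-1/2) * (x * q + x powr (1/2 + \<alpha>/2)))
         \<le> exp (1 - x powr (\<alpha>/2))"
proof -
  define r where "r = sqrt x"
  define y where "y = x powr (\<alpha>/2)"
  note pf = powr_facts[OF x a, folded r_def y_def]
  have r1: "1 \<le> r" by (rule pf(7))
  have r0: "r > 0" using r1 by simp
  have eb: "exp (1/r) - 1 \<le> 1/r + 1/r\<^sup>2"
    using exp_bound[of "1/r"] r1 by (simp add: power_divide)
  have "x * q * (exp (x powr (-1/2)) - 1) - x powr (-1/2) * (x * q + x powr (1/2 + \<alpha>/2))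
        = r\<^sup>2 * q * (exp (1/r) - 1) - (1/r) * (r\<^sup>2 * q + r * y)"
  proof -
    have xr: "x = r\<^sup>2" using pf(8) by simp
    show ?thesis unfolding pf(1) pf(2) by (simp add: xr)
  qed
  also have "\<dots> \<le> r\<^sup>2 * q * (1/r + 1/r\<^sup>2) - (1/r) * (r\<^sup>2 * q + r * y)"
    using mult_left_mono[OF eb, of "r\<^sup>2 * q"] q by simp
  also have "\<dots> = q - y" using r0 by (simp add: field_simps power2_eq_square)
  also have "\<dots> \<le> 1 - y" using q by simp
  finally show ?thesis unfolding y_def by simp
qed


lemma IRD_zero:
  assumes "pmf p t = 0 \<or> pmf p s = 0"
  shows "measure_pmf.prob (IRD n p k) {G. 0 < arc_count n G t s} = 0"
proof -
  have "set_pmf (IRD n p k) \<inter> {G. 0 < arc_count n G t s} = {}"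
  proof (safe)
    fix T E assume G: "(T, E) \<in> set_pmf (IRD n p k)" and pos: "0 < arc_count n (T, E) t s"
    from G have "T \<in> set_pmf (Pi_pmf {1..n} 0 (\<lambda>_. p))" by (auto simp: IRD_def)
    hence Tv: "\<forall>v\<in>{1..n}. T v \<in> set_pmf p" by (auto simp: set_Pi_pmf PiE_dflt_def)
    from pos have "{(v, w). v \<in> {1..n} \<and> w \<in> {1..n} \<and> v \<noteq> w \<and>
                                  E (v, w) \<and> T v = t \<and> T w = s} \<noteq> {}"
      unfolding arc_count_def by (metis card.empty less_irrefl fst_conv snd_conv)
    then obtain v w where "v \<in> {1..n}" "w \<in> {1..n}" "T v = t" "T w = s" by blast
    with Tv have "t \<in> set_pmf p" "s \<in> set_pmf p" by auto
    with assms show "(T, E) \<in> {}" by (auto simp: set_pmf_eq)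
  qed
  then show ?thesis by (simp add: measure_pmf_zero_iff)
qed

theorem lemma4:
  fixes p :: "nat pmf" and S :: "nat set" and \<delta> \<tau> \<alpha> C :: real
    and \<kappa> :: "nat \<Rightarrow> nat \<Rightarrow> real" and \<kappa>' :: "nat \<Rightarrow> nat \<Rightarrow> nat \<Rightarrow> real"
    and t s :: nat
  assumes values_S: "set_pmf p \<subseteq> S"
    and delta_pos: "\<delta> > 0"
    and moment: "integrable (measure_pmf p) (\<lambda>x. real x powr \<delta>)"
    and tau: "0 < \<tau>" "\<tau> < 1"
    and kappa_nonneg: "\<And>x y. x \<in> S \<Longrightarrow> y \<in> S \<Longrightarrow> \<kappa> x y \<ge> 0"
    and kappa'_nonneg: "\<And>n x y. x \<in> S \<Longrightarrow> y \<in> S \<Longrightarrow> \<kappa>' n x y \<ge> 0"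
    and ts: "t \<in> S" "s \<in> S"
    and alpha: "1/2 - \<tau>/2 < \<alpha>" "\<alpha> < 1/2"
    and C_pos: "C > 0"
    and kappa'_le: "\<And>n. \<kappa>' n t s \<le> \<kappa> t s - C * real n powr (-1/2 + \<alpha>) / sqrt (pmf p t * pmf p s)"
  shows "\<forall>\<^sub>F n in sequentially.
           stable p \<tau> n t \<and> stable p \<tau> n s \<longrightarrow>
           measure_pmf.prob (IRD n p (\<kappa>' n))
             {G. real (arc_count n G t s) > of_int \<lfloor>real n * pmf p t * pmf p s * \<kappa> t s\<rfloor>}
           \<le> 2 * exp (- ((ln (real n)) ^ 2) / 2)"
  proof -
  define q1 where "q1 = pmf p t"
  define q2 where "q2 = pmf p s"
  define K where "K = \<kappa> t s"
  have K0: "0 \<le> K" using kappa_nonneg ts by (simp add: K_def)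
  have floor_le: "c \<le> real m" if "of_int \<lfloor>c\<rfloor> < real m" for c :: real and m :: nat
  proof -
    have "\<lfloor>c\<rfloor> < int m" using that by linarith
    then show ?thesis by (simp add: floor_less_iff less_imp_le)
  qed
  show ?thesis
  proof (cases "q1 = 0 \<or> q2 = 0")
    case True
    show ?thesis
    proof (intro always_eventually allI impI)
      fix n :: nat
      have fl: "\<lfloor>real n * pmf p t * pmf p s * \<kappa> t s\<rfloor> = 0"
        using True by (auto simp: q1_def q2_def)
      have "measure_pmf.prob (IRD n p (\<kappa>' n))
             {G. real (arc_count n G t s) > of_int \<lfloor>real n * pmf p t * pmf p s * \<kappa> t s\<rfloor>}
            = measure_pmf.prob (IRD n p (\<kappa>' n)) {G. 0 < arc_count n G t s}"
        unfolding fl by simp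
      also have "\<dots> = 0" by (rule IRD_zero) (use True in \<open>auto simp: q1_def q2_def\<close>)
      finally show "measure_pmf.prob (IRD n p (\<kappa>' n))
             {G. real (arc_count n G t s) > of_int \<lfloor>real n * pmf p t * pmf p s * \<kappa> t s\<rfloor>}
           \<le> 2 * exp (- ((ln (real n)) ^ 2) / 2)" by simp
    qed
  next
    case False
    have q1: "0 < q1" "q1 \<le> 1" using False by (auto simp: q1_def pmf_le_1)
    have q2: "0 < q2" "q2 \<le> 1" using False by (auto simp: q2_def pmf_le_1)
    define D where "D = C * sqrt (q1 * q2)"
    have D0: "D > 0" using C_pos q1 q2 by (simp add: D_def)
    have b0: "\<alpha> / 2 > 0" using alpha tau by linarith
    have a0: "0 < \<alpha>" using alpha tau by linarith
    have ev1: "eventually (\<lambda>x. - D * (x powr (\<alpha>/2))\<^sup>2 + 2 * K * x powr (\<alpha>/2) + 5 * K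
                 \<le> - ((ln x) ^ 2) / 2 - ln 2) at_top"
      using b0 D0 by real_asymp
    have ev2: "eventually (\<lambda>x. 1 - x powr (\<alpha>/2) \<le> - ((ln x) ^ 2) / 2 - ln 4) at_top"
      using b0 by real_asymp
    have ev3: "eventually (\<lambda>x::real. x \<ge> 1) at_top" by (rule eventually_ge_at_top)
    have ev: "eventually (\<lambda>x. (- D * (x powr (\<alpha>/2))\<^sup>2 + 2 * K * x powr (\<alpha>/2) + 5 * K
                 \<le> - ((ln x) ^ 2) / 2 - ln 2) \<and> (1 - x powr (\<alpha>/2) \<le> - ((ln x) ^ 2) / 2 - ln 4)
                 \<and> x \<ge> 1) at_top"
      using ev1 ev2 ev3 by eventually_elim auto
    note evn = eventually_compose_filterlim[OF ev filterlim_real_sequentially]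
    show ?thesis
    proof (rule eventually_mono[OF evn], intro impI)
      fix n :: nat
      define x where "x = real n"
      define L where "L = (ln x) ^ 2 / 2"
      assume H: "(- D * (real n powr (\<alpha>/2))\<^sup>2 + 2 * K * real n powr (\<alpha>/2) + 5 * K
                 \<le> - ((ln (real n)) ^ 2) / 2 - ln 2) \<and> (1 - real n powr (\<alpha>/2) \<le> - ((ln (real n)) ^ 2) / 2 - ln 4)
                 \<and> real n \<ge> 1"
      hence H1: "- D * (x powr (\<alpha>/2))\<^sup>2 + 2 * K * x powr (\<alpha>/2) + 5 * K \<le> - L - ln 2"
        and H2: "1 - x powr (\<alpha>/2) \<le> - L - ln 4" and x1: "x \<ge> 1"
        by (auto simp: x_def L_def)
      define a where "a = x powr (1/2 + \<alpha>/2)"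
      define l where "l = x powr (-1/2)"
      define c where "c = x * q1 * q2 * K"
      have k0: "0 \<le> \<kappa>' n t s" using kappa'_nonneg ts by simp
      have l0: "l > 0" using x1 by (simp add: l_def)
      have a00: "0 \<le> a" by (simp add: a_def)
      have "measure_pmf.prob (IRD n p (\<kappa>' n))
             {G. real (arc_count n G t s) > of_int \<lfloor>real n * pmf p t * pmf p s * \<kappa> t s\<rfloor>}
            \<le> measure_pmf.prob (IRD n p (\<kappa>' n)) {G. c \<le> real (arc_count n G t s)}"
        by (intro measure_pmf.finite_measure_mono)
           (auto simp: c_def x_def q1_def q2_def K_def intro: floor_le)
      also have "\<dots> \<le> exp ((x * q1 + a) * (x * q2 + a) * (\<kappa>' n t s / x) * (exp l - 1) - l * c)
          + exp (x * q1 * (exp l - 1) - l * (x * q1 + a))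
          + exp (x * q2 * (exp l - 1) - l * (x * q2 + a))"
        using IRD_tail[where n=n and p=p and k="\<kappa>' n" and t=t and s=s and a=a and l=l and c=c, OF k0 l0 a00] by (simp add: x_def q1_def q2_def)
      also have "exp ((x * q1 + a) * (x * q2 + a) * (\<kappa>' n t s / x) * (exp l - 1) - l * c)
          \<le> exp (- C * sqrt (q1 * q2) * (x powr (\<alpha>/2))\<^sup>2 + 2 * K * x powr (\<alpha>/2) + 5 * K)"
        unfolding a_def l_def c_def
        by (rule alg_x[OF x1 q1 q2 k0 _ C_pos a0 alpha(2)])
           (use kappa'_le[of n] in \<open>simp add: x_def q1_def q2_def K_def\<close>)
      also have "\<dots> = exp (- D * (x powr (\<alpha>/2))\<^sup>2 + 2 * K * x powr (\<alpha>/2) + 5 * K)"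
        by (simp add: D_def)
      also have "\<dots> \<le> exp (- L - ln 2)" using H1 by simp
      also have "exp (x * q1 * (exp l - 1) - l * (x * q1 + a)) \<le> exp (1 - x powr (\<alpha>/2))"
        unfolding a_def l_def by (rule alg_t[OF x1 _ q1(2) a0 alpha(2)]) (use q1 in simp)
      also have "\<dots> \<le> exp (- L - ln 4)" using H2 by simp
      also have "exp (x * q2 * (exp l - 1) - l * (x * q2 + a)) \<le> exp (1 - x powr (\<alpha>/2))"
        unfolding a_def l_def by (rule alg_t[OF x1 _ q2(2) a0 alpha(2)]) (use q2 in simp)
      also have "\<dots> \<le> exp (- L - ln 4)" using H2 by simp
      also have "exp (- L - ln 2) + exp (- L - ln 4) + exp (- L - ln 4) = exp (- L)"
        by (simp add: exp_diff)
      also have "\<dots> \<le> 2 * exp (- ((ln (real n)) ^ 2) / 2)"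
        by (simp add: L_def x_def)
      finally show "measure_pmf.prob (IRD n p (\<kappa>' n))
             {G. real (arc_count n G t s) > of_int \<lfloor>real n * pmf p t * pmf p s * \<kappa> t s\<rfloor>}
           \<le> 2 * exp (- ((ln (real n)) ^ 2) / 2)" by simp
    qed
  qed
qed

end
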